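(* Let $p\in\{*,\le\omega\}$ and $L\subseteq\Sigma^p$ (where $\Sigma^{\le\omega}=\Sigma^*\cup\Sigma^\omega$). Then $\gamma_p(\alpha_p(L))\subseteq L(\mathfrak A)$ if and only if $L\subseteq L(\mathfrak A)$.
   Context: $\Sigma$ is a finite alphabet; concatenation $w\cdot u$ equals $wu$ if $w$ is finite and $w$ if $w$ is infinite, extended pointwise to languages. For $A\subseteq\Sigma^*$, $A^\omega$ is the set of all words $w_0w_1w_2\cdots$ with $w_i\in A$, and $CD^\omega$ means $C\cdot D^\omega$. Fix an extended Büchi automaton $\mathfrak A=(Q,\Sigma,\delta,q_0,F)$ (finite states, $\delta:Q\times\Sigma\to\mathcal P(Q)$, initial $q_0$, final $F$). Its language $L(\mathfrak A)\subseteq\Sigma^{\le\omega}$ consists of all finite words along which some path from $q_0$ reaches a final state, together with all infinite words having a run from $q_0$ visiting final states infinitely often. For $w\in\Sigma^*$ write $p\overset{w}{\leadsto}q$ if $q$ is reachable from $p$ reading $w$, and $p\overset{w}{\leadsto}_F q$ if there are $q''\in F$, $w=uv$ with $p\overset{u}{\leadsto}q''\overset{v}{\leadsto}q$. For $w,u\in\Sigma^+$, $w\sim u$ iff for all $p,q$: $p\overset{w}{\leadsto}q\Leftrightarrow p\overset{u}{\leadsto}q$ and $p\overset{w}{\leadsto}_Fq\Leftrightarrow p\overset{u}{\leadsto}_Fq$. $\mathcal Q=\Sigma^+/{\sim}\uplus\{[\epsilon]\}$ with $[\epsilon]=\{\epsilon\}$; concatenation of classes is well defined. Let $\mathcal C=\{(C,D)\mid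 C,D\in\mathcal Q,\ CD=C,\ DD=D\}$. Define $\mathfrak f(V)=\{(C,D)\in\mathcal C\mid CD^\omega\cap V\neq\emptyset\}$ and $\mathfrak g(\mathcal V)=\bigcup_{(C,D)\in\mathcal V}CD^\omega$; the closure is $\mathfrak c(\mathcal V)=\bigcup_{n\ge1}(\mathfrak f\circ\mathfrak g)^n(\mathcal V)$. $\mathcal M_{\le\omega}=\{\mathfrak c(\mathfrak f(V))\mid V\subseteq\Sigma^{\le\omega}\}$, $\mathcal M_*=\mathcal P(\mathcal Q)$. $\alpha_*(U)=\{C\in\mathcal Q\mid C\cap U\neq\emptyset\}$, $\alpha_{\le\omega}(V)=\mathfrak c(\mathfrak f(V))$, $\gamma_*(\mathcal U)=\bigcup_{C\in\mathcal U}C$, $\gamma_{\le\omega}(\mathcal V)=\mathfrak g(\mathcal V)$. *)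

theory Defs
  imports Main
begin

datatype 'a xword = Fin "'a list" | Inf "nat \<Rightarrow> 'a"

fun wconc :: "'a xword \<Rightarrow> 'a xword \<Rightarrow> 'a xword" where
  "wconc (Fin w) (Fin u) = Fin (w @ u)"
| "wconc (Fin w) (Inf u) = Inf (\<lambda>n. if n < length w then w ! n else u (n - length w))"
| "wconc (Inf w) u = Inf w"

text \<open>Infinite concatenation w0 w1 w2 ... of a sequence of finite words
  (a finite word if only finitely many factors are nonempty).\<close>
definition prefix_len :: "(nat \<Rightarrow> 'a list) \<Rightarrow> nat \<Rightarrow> nat" where
  "prefix_len ws k = sum_list (map (\<lambda>i. length (ws i)) [0..<k])"

definition infconcat :: "(nat \<Rightarrow> 'a list) \<Rightarrow> 'a xword" where
  "infconcat ws =
     (if \<exists>N. \<forall>i\<ge>N. ws i = []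
      then Fin (concat (map ws [0..<(LEAST N. \<forall>i\<ge>N. ws i = [])]))
      else Inf (\<lambda>n. let k = (LEAST k. n < prefix_len ws (Suc k))
                     in ws k ! (n - prefix_len ws k)))"

definition omega_pow :: "'a list set \<Rightarrow> 'a xword set" where
  "omega_pow A = {infconcat ws | ws. \<forall>i. ws i \<in> A}"

definition cdomega :: "'a list set \<Rightarrow> 'a list set \<Rightarrow> 'a xword set" where
  "cdomega C D = {wconc (Fin c) x | c x. c \<in> C \<and> x \<in> omega_pow D}"

fun reach :: "('q \<Rightarrow> 'a \<Rightarrow> 'q set) \<Rightarrow> 'q \<Rightarrow> 'a list \<Rightarrow> 'q \<Rightarrow> bool" where
  "reach \<delta> p [] q = (p = q)"
| "reach \<delta> p (a # w) q = (\<exists>p'\<in>\<delta> p a. reach \<delta> p' w q)"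

definition reachF :: "('q \<Rightarrow> 'a \<Rightarrow> 'q set) \<Rightarrow> 'q set \<Rightarrow> 'q \<Rightarrow> 'a list \<Rightarrow> 'q \<Rightarrow> bool" where
  "reachF \<delta> F p w q = (\<exists>q''\<in>F. \<exists>u v. w = u @ v \<and> reach \<delta> p u q'' \<and> reach \<delta> q'' v q)"

definition lang :: "('q \<Rightarrow> 'a \<Rightarrow> 'q set) \<Rightarrow> 'q \<Rightarrow> 'q set \<Rightarrow> 'a xword set" where
  "lang \<delta> q0 F =
     {Fin w | w. \<exists>q\<in>F. reach \<delta> q0 w q}
   \<union> {Inf w | w. \<exists>r. r 0 = q0 \<and> (\<forall>i. r (Suc i) \<in> \<delta> (r i) (w i)) \<and> (\<exists>\<^sub>\<infinity>i. r i \<in> F)}"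

definition aequiv :: "('q \<Rightarrow> 'a \<Rightarrow> 'q set) \<Rightarrow> 'q set \<Rightarrow> 'a list \<Rightarrow> 'a list \<Rightarrow> bool" where
  "aequiv \<delta> F w u = (\<forall>p q. (reach \<delta> p w q \<longleftrightarrow> reach \<delta> p u q) \<and> (reachF \<delta> F p w q \<longleftrightarrow> reachF \<delta> F p u q))"

definition cls :: "('q \<Rightarrow> 'a \<Rightarrow> 'q set) \<Rightarrow> 'q set \<Rightarrow> 'a list \<Rightarrow> 'a list set" where
  "cls \<delta> F w = (if w = [] then {[]} else {u. u \<noteq> [] \<and> aequiv \<delta> F w u})"

definition classes :: "('q \<Rightarrow> 'a \<Rightarrow> 'q set) \<Rightarrow> 'q set \<Rightarrow> 'a list set set" where
  "classes \<delta> F = range (cls \<delta> F)"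

definition cmult :: "('q \<Rightarrow> 'a \<Rightarrow> 'q set) \<Rightarrow> 'q set \<Rightarrow> 'a list set \<Rightarrow> 'a list set \<Rightarrow> 'a list set" where
  "cmult \<delta> F C D = cls \<delta> F ((SOME c. c \<in> C) @ (SOME d. d \<in> D))"

definition pairs :: "('q \<Rightarrow> 'a \<Rightarrow> 'q set) \<Rightarrow> 'q set \<Rightarrow> ('a list set \<times> 'a list set) set" where
  "pairs \<delta> F = {(C, D). C \<in> classes \<delta> F \<and> D \<in> classes \<delta> F
                      \<and> cmult \<delta> F C D = C \<and> cmult \<delta> F D D = D}"

definition ff :: "('q \<Rightarrow> 'a \<Rightarrow> 'q set) \<Rightarrow> 'q set \<Rightarrow> 'a xword set \<Rightarrow> ('a list set \<times> 'a list set) set" where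
  "ff \<delta> F V = {(C, D) \<in> pairs \<delta> F. cdomega C D \<inter> V \<noteq> {}}"

definition gg :: "('a list set \<times> 'a list set) set \<Rightarrow> 'a xword set" where
  "gg VV = (\<Union>(C, D)\<in>VV. cdomega C D)"

definition cl :: "('q \<Rightarrow> 'a \<Rightarrow> 'q set) \<Rightarrow> 'q set \<Rightarrow> ('a list set \<times> 'a list set) set \<Rightarrow> ('a list set \<times> 'a list set) set" where
  "cl \<delta> F VV = (\<Union>n\<in>{1..}. ((ff \<delta> F \<circ> gg) ^^ n) VV)"

definition alpha_star :: "('q \<Rightarrow> 'a \<Rightarrow> 'q set) \<Rightarrow> 'q set \<Rightarrow> 'a list set \<Rightarrow> 'a list set set" where
  "alpha_star \<delta> F U = {C \<in> classes \<delta> F. C \<inter> U \<noteq> {}}"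

definition gamma_star :: "'a list set set \<Rightarrow> 'a list set" where
  "gamma_star UU = \<Union>UU"

definition alpha_omega :: "('q \<Rightarrow> 'a \<Rightarrow> 'q set) \<Rightarrow> 'q set \<Rightarrow> 'a xword set \<Rightarrow> ('a list set \<times> 'a list set) set" where
  "alpha_omega \<delta> F V = cl \<delta> F (ff \<delta> F V)"

definition gamma_omega :: "('a list set \<times> 'a list set) set \<Rightarrow> 'a xword set" where
  "gamma_omega VV = gg VV"

end

theory Submission
  imports Defs "HOL-Library.Ramsey" "HOL-Library.Infinite_Set"
begin

lemma aequiv_refl: "aequiv \<delta> F w w" by (simp add: aequiv_def)
lemma aequiv_sym: "aequiv \<delta> F w u \<Longrightarrow> aequiv \<delta> F u w" by (simp add: aequiv_def)
lemma aequiv_trans: "aequiv \<delta> F w u \<Longrightarrow> aequiv \<delta> F u v \<Longrightarrow> aequiv \<delta> F w v" by (simp add: aequiv_def)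

lemma reach_append: "reach \<delta> p (a @ b) q \<longleftrightarrow> (\<exists>m. reach \<delta> p a m \<and> reach \<delta> m b q)"
  by (induction a arbitrary: p) auto

lemma reachF_append:
  "reachF \<delta> F p (a @ b) q \<longleftrightarrow> (\<exists>m. (reachF \<delta> F p a m \<and> reach \<delta> m b q) \<or> (reach \<delta> p a m \<and> reachF \<delta> F m b q))"
proof
  assume "reachF \<delta> F p (a @ b) q"
  then obtain q'' u v where q'': "q'' \<in> F" "a @ b = u @ v" "reach \<delta> p u q''" "reach \<delta> q'' v q"
    unfolding reachF_def by blast
  then obtain us where "(a = u @ us \<and> us @ b = v) \<or> (a @ us = u \<and> b = us @ v)"
    using append_eq_append_conv2 by metis
  then show "\<exists>m. (reachF \<delta> F p a m \<and> reach \<delta> m b q) \<or> (reach \<delta> p a m \<and> reachF \<delta> F m b q)"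
  proof
    assume h: "a = u @ us \<and> us @ b = v"
    then obtain m where "reach \<delta> q'' us m" "reach \<delta> m b q" using q'' reach_append by metis
    then show ?thesis using h q'' unfolding reachF_def by blast
  next
    assume h: "a @ us = u \<and> b = us @ v"
    then obtain m where "reach \<delta> p a m" "reach \<delta> m us q''" using q'' reach_append by metis
    then show ?thesis using h q'' unfolding reachF_def by blast
  qed
next
  assume "\<exists>m. (reachF \<delta> F p a m \<and> reach \<delta> m b q) \<or> (reach \<delta> p a m \<and> reachF \<delta> F m b q)"
  then obtain m where "(reachF \<delta> F p a m \<and> reach \<delta> m b q) \<or> (reach \<delta> p a m \<and> reachF \<delta> F m b q)" by blast
  then show "reachF \<delta> F p (a @ b) q"
  proof
    assume h: "reachF \<delta> F p a m \<and> reach \<delta> m b q"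
    then obtain q'' u v where "q'' \<in> F" "a = u @ v" "reach \<delta> p u q''" "reach \<delta> q'' v m"
      unfolding reachF_def by blast
    then show ?thesis using h unfolding reachF_def
      by (metis append.assoc reach_append)
  next
    assume h: "reach \<delta> p a m \<and> reachF \<delta> F m b q"
    then obtain q'' u v where "q'' \<in> F" "b = u @ v" "reach \<delta> m u q''" "reach \<delta> q'' v q"
      unfolding reachF_def by blast
    then show ?thesis using h unfolding reachF_def
      by (metis append.assoc reach_append)
  qed
qed

lemma aequiv_append:
  assumes "aequiv \<delta> F a a'" "aequiv \<delta> F b b'"
  shows "aequiv \<delta> F (a @ b) (a' @ b')"
  using assms unfolding aequiv_def by (simp add: reach_append reachF_append)

lemma cls_self: "w \<in> cls \<delta> F w"
  by (simp add: cls_def aequiv_refl)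

lemma cls_eq_iff: "cls \<delta> F a = cls \<delta> F a' \<longleftrightarrow> ((a = []) = (a' = []) \<and> aequiv \<delta> F a a')"
proof
  assume h: "cls \<delta> F a = cls \<delta> F a'"
  show "(a = []) = (a' = []) \<and> aequiv \<delta> F a a'"
  proof (cases "a = []")
    case True
    then have "cls \<delta> F a' = {[]}" using h by (simp add: cls_def)
    then have "a' = []" using cls_self[of a' \<delta> F] by auto
    then show ?thesis using True by (simp add: aequiv_refl)
  next
    case False
    have "a \<in> cls \<delta> F a'" using h cls_self[of a \<delta> F] by simp
    moreover have "a' \<noteq> []" using False calculation by (auto simp: cls_def)
    ultimately show ?thesis using False by (auto simp: cls_def aequiv_sym)
  qed
next
  assume "(a = []) = (a' = []) \<and> aequiv \<delta> F a a'"
  then show "cls \<delta> F a = cls \<delta> F a'"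
    by (auto simp: cls_def intro: aequiv_trans aequiv_sym)
qed

lemma cls_cong: "cls \<delta> F a = cls \<delta> F a' \<Longrightarrow> cls \<delta> F b = cls \<delta> F b' \<Longrightarrow> cls \<delta> F (a @ b) = cls \<delta> F (a' @ b')"
  by (simp add: cls_eq_iff aequiv_append)

lemma mem_cls: "u \<in> cls \<delta> F w \<Longrightarrow> cls \<delta> F u = cls \<delta> F w"
  unfolding cls_eq_iff by (auto simp: cls_def split: if_splits intro: aequiv_sym aequiv_refl aequiv_trans)

lemma lang_Fin: "Fin w \<in> lang \<delta> q0 F \<longleftrightarrow> (\<exists>q\<in>F. reach \<delta> q0 w q)"
  by (simp add: lang_def)

lemma lang_Inf: "Inf w \<in> lang \<delta> q0 F \<longleftrightarrow> (\<exists>r. r 0 = q0 \<and> (\<forall>i. r (Suc i) \<in> \<delta> (r i) (w i)) \<and> (\<exists>\<^sub>\<infinity>i. r i \<in> F))"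
  by (simp add: lang_def)

lemma aequiv_lang: "aequiv \<delta> F u v \<Longrightarrow> Fin u \<in> lang \<delta> q0 F \<Longrightarrow> Fin v \<in> lang \<delta> q0 F"
  by (auto simp: lang_Fin aequiv_def)

lemma part1:
  "gamma_star (alpha_star \<delta> F L) \<subseteq> {w. Fin w \<in> lang \<delta> q0 F} \<longleftrightarrow> L \<subseteq> {w. Fin w \<in> lang \<delta> q0 F}"
proof
  assume h: "gamma_star (alpha_star \<delta> F L) \<subseteq> {w. Fin w \<in> lang \<delta> q0 F}"
  have "L \<subseteq> gamma_star (alpha_star \<delta> F L)"
  proof
    fix w assume "w \<in> L"
    then have "cls \<delta> F w \<in> alpha_star \<delta> F L"
      using cls_self[of w \<delta> F] by (auto simp: alpha_star_def classes_def)
    then show "w \<in> gamma_star (alpha_star \<delta> F L)" using cls_self[of w \<delta> F] by (auto simp: gamma_star_def)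
  qed
  then show "L \<subseteq> {w. Fin w \<in> lang \<delta> q0 F}" using h by blast
next
  assume h: "L \<subseteq> {w. Fin w \<in> lang \<delta> q0 F}"
  show "gamma_star (alpha_star \<delta> F L) \<subseteq> {w. Fin w \<in> lang \<delta> q0 F}"
  proof
    fix u assume "u \<in> gamma_star (alpha_star \<delta> F L)"
    then obtain C l where C: "C \<in> classes \<delta> F" "u \<in> C" "l \<in> C" "l \<in> L"
      by (auto simp: gamma_star_def alpha_star_def)
    then obtain w where "C = cls \<delta> F w" by (auto simp: classes_def)
    then have "cls \<delta> F l = cls \<delta> F u" using C mem_cls by metis
    then have "aequiv \<delta> F l u" by (simp add: cls_eq_iff)
    moreover have "Fin l \<in> lang \<delta> q0 F" using h C by auto
    ultimately show "u \<in> {w. Fin w \<in> lang \<delta> q0 F}" using aequiv_lang[of \<delta> F l u q0] by simp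
  qed
qed

lemma prefix_len_0[simp]: "prefix_len ws 0 = 0"
  by (simp add: prefix_len_def)

lemma prefix_len_Suc[simp]: "prefix_len ws (Suc k) = prefix_len ws k + length (ws k)"
  by (simp add: prefix_len_def)

lemma prefix_len_mono:
  assumes "\<forall>i. ws i \<noteq> []" shows "strict_mono (prefix_len ws)"
  using assms by (simp add: strict_mono_Suc_iff)

lemma least_seg:
  assumes "strict_mono (b :: nat \<Rightarrow> nat)" "b k \<le> n" "n < b (Suc k)"
  shows "(LEAST k. n < b (Suc k)) = k"
proof (rule Least_equality)
  show "n < b (Suc k)" by fact
  fix k' assume "n < b (Suc k')"
  show "k \<le> k'"
  proof (rule ccontr)
    assume "\<not> k \<le> k'"
    then have "Suc k' \<le> k" by simp
    then have "b (Suc k') \<le> b k" using assms(1) strict_mono_less_eq by blast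
    then show False using \<open>n < b (Suc k')\<close> assms(2) by simp
  qed
qed

lemma exists_seg:
  assumes "strict_mono (b :: nat \<Rightarrow> nat)" "b 0 \<le> n"
  shows "\<exists>k. b k \<le> n \<and> n < b (Suc k)"
proof -
  have ex: "\<exists>k. n < b (Suc k)"
    using strict_mono_imp_increasing[OF assms(1), of "Suc n"] by (intro exI[of _ n]) simp
  define k where "k = (LEAST k. n < b (Suc k))"
  have k1: "n < b (Suc k)" unfolding k_def using LeastI_ex[OF ex] .
  have "b k \<le> n"
  proof (cases k)
    case 0 then show ?thesis using assms by simp
  next
    case (Suc k')
    then have "\<not> n < b (Suc k')" using not_less_Least[of k' "\<lambda>k. n < b (Suc k)"] k_def by simp
    then show ?thesis using Suc by simp
  qed
  then show ?thesis using k1 by blast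
qed

lemma infconcat_nonempty:
  assumes ne: "\<forall>i. ws i \<noteq> []"
  shows "\<exists>W. infconcat ws = Inf W \<and> (\<forall>k. ws k = map W [prefix_len ws k..<prefix_len ws (Suc k)])"
proof -
  let ?pl = "prefix_len ws"
  have sm: "strict_mono ?pl" using prefix_len_mono[OF ne] .
  have nex: "\<not> (\<exists>N. \<forall>i\<ge>N. ws i = [])" using ne by blast
  define W where "W = (\<lambda>n. let k = (LEAST k. n < ?pl (Suc k)) in ws k ! (n - ?pl k))"
  have "infconcat ws = Inf W" unfolding infconcat_def W_def using nex by simp
  moreover have "ws k = map W [?pl k..<?pl (Suc k)]" for k
  proof (rule nth_equalityI)
    show "length (ws k) = length (map W [?pl k..<?pl (Suc k)])" by simp
    fix j assume "j < length (ws k)"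
    then have "(LEAST k'. ?pl k + j < ?pl (Suc k')) = k"
      by (intro least_seg[OF sm]) auto
    then show "ws k ! j = map W [?pl k..<?pl (Suc k)] ! j"
      using \<open>j < length (ws k)\<close> by (simp add: W_def Let_def)
  qed
  ultimately show ?thesis by blast
qed

lemma infconcat_segs:
  assumes sm: "strict_mono (b :: nat \<Rightarrow> nat)"
  shows "infconcat (\<lambda>k. map w [b k..<b (Suc k)]) = Inf (\<lambda>n. w (n + b 0))"
proof -
  let ?ws = "\<lambda>k. map w [b k..<b (Suc k)]"
  have ne: "\<forall>i. ?ws i \<noteq> []"
  proof
    fix i have "b i < b (Suc i)" using sm by (simp add: strict_mono_Suc_iff)
    then show "?ws i \<noteq> []" by simp
  qed
  obtain W where W: "infconcat ?ws = Inf W" "\<forall>k. ?ws k = map W [prefix_len ?ws k..<prefix_len ?ws (Suc k)]"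
    using infconcat_nonempty[OF ne] by blast
  have pl: "prefix_len ?ws k = b k - b 0" for k
  proof (induction k)
    case 0 then show ?case by simp
  next
    case (Suc k)
    have "b 0 \<le> b k" "b k \<le> b (Suc k)" by (simp_all add: strict_mono_less_eq[OF sm])
    then show ?case using Suc by simp
  qed
  have "W n = w (n + b 0)" for n
  proof -
    obtain k where k: "b k \<le> n + b 0" "n + b 0 < b (Suc k)" using exists_seg[OF sm, of "n + b 0"] by auto
    have "b 0 \<le> b k" by (simp add: strict_mono_less_eq[OF sm])
    have "map w [b k..<b (Suc k)] = map W [b k - b 0..<b (Suc k) - b 0]"
      using W(2)[rule_format, of k] unfolding pl .
    then have "map w [b k..<b (Suc k)] ! (n + b 0 - b k) = map W [b k - b 0..<b (Suc k) - b 0] ! (n + b 0 - b k)"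
      by (rule arg_cong)
    moreover have "n + b 0 - b k < b (Suc k) - b k" using k by simp
    ultimately show ?thesis using k \<open>b 0 \<le> b k\<close> by (simp add: nth_map_upt)
  qed
  then show ?thesis using W(1) by auto
qed

lemma infconcat_empty: "infconcat (\<lambda>_. []) = Fin []"
proof -
  have "(LEAST N::nat. \<forall>i\<ge>N. ([]::'a list) = []) = 0" by simp
  then show ?thesis by (simp add: infconcat_def)
qed

lemma wconc_prefix: "wconc (Fin (map w [0..<c])) (Inf (\<lambda>n. w (n + c))) = Inf w"
  by auto

lemma seg_nth:
  assumes "ds k = map W [prefix_len ds k..<prefix_len ds (Suc k)]" "j < length (ds k)"
  shows "ds k ! j = W (prefix_len ds k + j)"
proof -
  have "ds k ! j = map W [prefix_len ds k..<prefix_len ds (Suc k)] ! j" using assms(1) by (rule arg_cong)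
  also have "\<dots> = W (prefix_len ds k + j)"
    using assms(2) by (subst nth_map_upt) auto
  finally show ?thesis .
qed

lemma wconc_infconcat:
  assumes ne: "\<forall>i. ds i \<noteq> []"
  shows "wconc (Fin c) (infconcat ds) = infconcat (\<lambda>k. if k = 0 then c @ ds 0 else ds k)"
proof -
  let ?ds' = "\<lambda>k. if k = 0 then c @ ds 0 else ds k"
  obtain W where W: "infconcat ds = Inf W" "\<forall>k. ds k = map W [prefix_len ds k..<prefix_len ds (Suc k)]"
    using infconcat_nonempty[OF ne] by blast
  have Wn: "j < length (ds k) \<Longrightarrow> ds k ! j = W (prefix_len ds k + j)" for j k
    using seg_nth W(2) by blast
  define V where "V = (\<lambda>n. if n < length c then c ! n else W (n - length c))"
  have wc: "wconc (Fin c) (infconcat ds) = Inf V" unfolding W(1) V_def by simp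
  define b where "b = (\<lambda>k. if k = 0 then 0 else length c + prefix_len ds k)"
  have sm: "strict_mono b"
    unfolding strict_mono_Suc_iff
  proof
    fix k show "b k < b (Suc k)" using ne by (cases k) (auto simp: b_def)
  qed
  have segs: "?ds' k = map V [b k..<b (Suc k)]" for k
  proof (cases k)
    case 0
    have "c @ ds 0 = map V [0..<length c + length (ds 0)]"
    proof (rule nth_equalityI)
      fix j assume "j < length (c @ ds 0)"
      then show "(c @ ds 0) ! j = map V [0..<length c + length (ds 0)] ! j"
        using Wn[of "j - length c" 0] by (auto simp: V_def nth_append)
    qed simp
    then show ?thesis using 0 by (simp add: b_def)
  next
    case (Suc k')
    have "ds k = map V [length c + prefix_len ds k..<length c + prefix_len ds (Suc k)]"
    proof (rule nth_equalityI)
      show "length (ds k) = length (map V [length c + prefix_len ds k..<length c + prefix_len ds (Suc k)])"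
        by simp
      fix j assume "j < length (ds k)"
      then show "ds k ! j = map V [length c + prefix_len ds k..<length c + prefix_len ds (Suc k)] ! j"
        using Wn[of j k] by (simp add: V_def)
    qed
    then show ?thesis using Suc by (simp add: b_def)
  qed
  have "infconcat ?ds' = infconcat (\<lambda>k. map V [b k..<b (Suc k)])" using segs by (metis (no_types, lifting))
  also have "\<dots> = Inf V" using infconcat_segs[OF sm, of V] by (simp add: b_def)
  finally show ?thesis using wc by simp
qed

lemma seg_append:
  assumes "i \<le> j" "j \<le> k"
  shows "map X [i..<j] @ map X [j..<k] = map X [i..<k]"
proof -
  obtain d where "k = j + d" using assms(2) le_Suc_ex by blast
  then show ?thesis using assms(1) upt_add_eq_append[of i j d] by simp
qed

lemma run_reach_n:
  assumes "\<forall>i. r (Suc i) \<in> \<delta> (r i) (X i)"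
  shows "reach \<delta> (r i) (map X [i..<i + n]) (r (i + n))"
proof (induction n arbitrary: i)
  case 0 then show ?case by simp
next
  case (Suc n)
  have eq: "[i..<i + Suc n] = i # [Suc i..<Suc i + n]" by (simp add: upt_rec)
  have ih: "reach \<delta> (r (Suc i)) (map X [Suc i..<Suc i + n]) (r (Suc i + n))" by (rule Suc.IH)
  have "r (Suc i) \<in> \<delta> (r i) (X i)" using assms by blast
  then have "reach \<delta> (r i) (X i # map X [Suc i..<Suc i + n]) (r (Suc i + n))"
    using ih by (simp only: reach.simps) blast
  then show ?case unfolding eq by simp
qed

lemma run_reach:
  assumes "\<forall>i. r (Suc i) \<in> \<delta> (r i) (X i)" "i \<le> j"
  shows "reach \<delta> (r i) (map X [i..<j]) (r j)"
  using run_reach_n[of r \<delta> X i "j - i", OF assms(1)] assms(2) by simp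

lemma run_reachF:
  assumes "\<forall>i. r (Suc i) \<in> \<delta> (r i) (X i)" "i \<le> m" "m \<le> j" "r m \<in> F"
  shows "reachF \<delta> F (r i) (map X [i..<j]) (r j)"
  unfolding reachF_def
  using run_reach[of r \<delta> X i m, OF assms(1,2)] run_reach[of r \<delta> X m j, OF assms(1,3)] seg_append[OF assms(2,3), of X] assms(4)
  by metis

lemma reach_run:
  "reach \<delta> p w q \<Longrightarrow> \<exists>s. s 0 = p \<and> s (length w) = q \<and> (\<forall>i<length w. s (Suc i) \<in> \<delta> (s i) (w ! i))"
proof (induction w arbitrary: p)
  case Nil then show ?case by auto
next
  case (Cons a w)
  then obtain p' where p': "p' \<in> \<delta> p a" "reach \<delta> p' w q" by auto
  then obtain s where s: "s 0 = p'" "s (length w) = q" "\<forall>i<length w. s (Suc i) \<in> \<delta> (s i) (w ! i)"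
    using Cons.IH by blast
  define s' where "s' = (\<lambda>i. if i = 0 then p else s (i - 1))"
  have "\<forall>i<length (a # w). s' (Suc i) \<in> \<delta> (s' i) ((a # w) ! i)"
  proof (intro allI impI)
    fix i assume "i < length (a # w)"
    then show "s' (Suc i) \<in> \<delta> (s' i) ((a # w) ! i)"
      using s p' by (cases i) (auto simp: s'_def)
  qed
  then show ?case using s by (intro exI[of _ s']) (auto simp: s'_def)
qed

lemma reachF_run:
  assumes "reachF \<delta> F p w q"
  shows "\<exists>s. s 0 = p \<and> s (length w) = q \<and> (\<forall>i<length w. s (Suc i) \<in> \<delta> (s i) (w ! i)) \<and> (\<exists>m\<le>length w. s m \<in> F)"
proof -
  obtain q'' u v where h: "q'' \<in> F" "w = u @ v" "reach \<delta> p u q''" "reach \<delta> q'' v q"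
    using assms unfolding reachF_def by blast
  obtain s1 where s1: "s1 0 = p" "s1 (length u) = q''" "\<forall>i<length u. s1 (Suc i) \<in> \<delta> (s1 i) (u ! i)"
    using reach_run[OF h(3)] by blast
  obtain s2 where s2: "s2 0 = q''" "s2 (length v) = q" "\<forall>i<length v. s2 (Suc i) \<in> \<delta> (s2 i) (v ! i)"
    using reach_run[OF h(4)] by blast
  define s where "s = (\<lambda>i. if i \<le> length u then s1 i else s2 (i - length u))"
  have "\<forall>i<length w. s (Suc i) \<in> \<delta> (s i) (w ! i)"
  proof (intro allI impI)
    fix i assume i: "i < length w"
    show "s (Suc i) \<in> \<delta> (s i) (w ! i)"
    proof (cases "i < length u")
      case True then show ?thesis using s1 h(2) by (auto simp: s_def nth_append)
    next
      case False
      then have "i - length u < length v" using i h(2) by simp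
      then have "s2 (Suc (i - length u)) \<in> \<delta> (s2 (i - length u)) (v ! (i - length u))" using s2 by blast
      moreover have "s i = s2 (i - length u)" using False s1 s2 by (auto simp: s_def)
      moreover have "s (Suc i) = s2 (Suc (i - length u))" using False by (auto simp: s_def Suc_diff_le)
      ultimately show ?thesis using False h(2) by (simp add: nth_append)
    qed
  qed
  moreover have "s 0 = p" "s (length w) = q" using s1 s2 h(2)
    by (auto simp: s_def)
  moreover have "\<exists>m\<le>length w. s m \<in> F" using s1 h(1,2) by (intro exI[of _ "length u"]) (simp add: s_def)
  ultimately show ?thesis using h(2) by (intro exI[of _ s]) auto
qed

lemma transfer_inf:
  assumes nex: "\<forall>k. xs k \<noteq> []" and ney: "\<forall>k. ys k \<noteq> []"
    and eq: "\<forall>k. aequiv \<delta> F (xs k) (ys k)" and x: "infconcat xs \<in> lang \<delta> q0 F"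
  shows "infconcat ys \<in> lang \<delta> q0 F"
proof -
  define bx where "bx = prefix_len xs"
  define by' where "by' = prefix_len ys"
  obtain X where X: "infconcat xs = Inf X" "\<forall>k. xs k = map X [bx k..<bx (Suc k)]"
    using infconcat_nonempty[OF nex] unfolding bx_def by blast
  obtain Y where Y: "infconcat ys = Inf Y" "\<forall>k. ys k = map Y [by' k..<by' (Suc k)]"
    using infconcat_nonempty[OF ney] unfolding by'_def by blast
  have smx: "strict_mono bx" unfolding bx_def using prefix_len_mono[OF nex] .
  have smy: "strict_mono by'" unfolding by'_def using prefix_len_mono[OF ney] .
  have bx0: "bx 0 = 0" by (simp add: bx_def)
  have by0: "by' 0 = 0" by (simp add: by'_def)
  have byS: "by' (Suc k) = by' k + length (ys k)" for k by (simp add: by'_def)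
  obtain r where r0: "r 0 = q0" and run: "\<forall>i. r (Suc i) \<in> \<delta> (r i) (X i)" and inf: "\<exists>\<^sub>\<infinity>i. r i \<in> F"
    using x X(1) by (auto simp: lang_Inf)
  define flag where "flag k = (\<exists>m. bx k \<le> m \<and> m \<le> bx (Suc k) \<and> r m \<in> F)" for k
  have flag_inf: "\<exists>k>N. flag k" for N
  proof -
    obtain m where m: "m > bx (Suc N)" "r m \<in> F" using inf unfolding INFM_nat by blast
    obtain k where k: "bx k \<le> m" "m < bx (Suc k)" using exists_seg[OF smx, of m] bx0 by auto
    have "k > N"
    proof (rule ccontr)
      assume "\<not> k > N"
      then have "bx (Suc k) \<le> bx (Suc N)" by (simp add: strict_mono_less_eq[OF smx])
      then show False using m k by simp
    qed
    moreover have "flag k" unfolding flag_def using k m by (intro exI[of _ m]) simp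
    ultimately show ?thesis by blast
  qed
  have le: "bx k \<le> bx (Suc k)" for k by (simp add: strict_mono_less_eq[OF smx])
  have rx: "reach \<delta> (r (bx k)) (xs k) (r (bx (Suc k)))" for k
    using run_reach[of r \<delta> X "bx k" "bx (Suc k)", OF run le] X(2) by metis
  have ry: "reach \<delta> (r (bx k)) (ys k) (r (bx (Suc k)))" for k
    using rx[of k] eq unfolding aequiv_def by blast
  have rFy: "flag k \<Longrightarrow> reachF \<delta> F (r (bx k)) (ys k) (r (bx (Suc k)))" for k
  proof -
    assume "flag k"
    then obtain m where m: "bx k \<le> m" "m \<le> bx (Suc k)" "r m \<in> F" unfolding flag_def by blast
    have "reachF \<delta> F (r (bx k)) (xs k) (r (bx (Suc k)))"
      using run_reachF[of r \<delta> X "bx k" m "bx (Suc k)" F, OF run m] X(2) by metis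
    then show ?thesis using eq unfolding aequiv_def by blast
  qed
  define good where "good k s = (s 0 = r (bx k) \<and> s (length (ys k)) = r (bx (Suc k))
     \<and> (\<forall>i<length (ys k). s (Suc i) \<in> \<delta> (s i) (ys k ! i)) \<and> (flag k \<longrightarrow> (\<exists>m\<le>length (ys k). s m \<in> F)))" for k s
  have "\<forall>k. \<exists>s. good k s"
  proof
    fix k show "\<exists>s. good k s"
    proof (cases "flag k")
      case True then show ?thesis using reachF_run[OF rFy[OF True]] unfolding good_def by blast
    next
      case False then show ?thesis using reach_run[OF ry[of k]] unfolding good_def by blast
    qed
  qed
  then obtain S where S: "\<forall>k. good k (S k)" using choice by blast
  define R where "R n = S (LEAST k. n < by' (Suc k)) (n - by' (LEAST k. n < by' (Suc k)))" for n
  have Rk: "R n = S k (n - by' k)" if "by' k \<le> n" "n \<le> by' (Suc k)" for n k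
  proof (cases "n < by' (Suc k)")
    case True
    then show ?thesis using least_seg[OF smy that(1) True] by (simp add: R_def)
  next
    case False
    then have n: "n = by' (Suc k)" using that by simp
    have "by' (Suc k) < by' (Suc (Suc k))" using smy by (simp add: strict_mono_Suc_iff)
    then have "(LEAST k'. n < by' (Suc k')) = Suc k" using least_seg[OF smy, of "Suc k" n] n by simp
    then have "R n = S (Suc k) 0" using n by (simp add: R_def)
    also have "\<dots> = r (bx (Suc k))" using S unfolding good_def by blast
    also have "\<dots> = S k (length (ys k))" using S unfolding good_def by metis
    also have "length (ys k) = n - by' k" using n byS by simp
    finally show ?thesis .
  qed
  have Rrun: "\<forall>n. R (Suc n) \<in> \<delta> (R n) (Y n)"
  proof
    fix n
    obtain k where k: "by' k \<le> n" "n < by' (Suc k)" using exists_seg[OF smy, of n] by0 by auto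
    define j where "j = n - by' k"
    have j: "j < length (ys k)" using k byS unfolding j_def by simp
    have a1: "R n = S k j" using Rk[of k n] k unfolding j_def by simp
    have a2: "Suc n - by' k = Suc j" using k(1) unfolding j_def by arith
    have a3: "R (Suc n) = S k (Suc n - by' k)" using Rk[of k "Suc n"] k by simp
    have yk: "ys k = map Y [prefix_len ys k..<prefix_len ys (Suc k)]" using Y(2) unfolding by'_def by blast
    have a4: "ys k ! j = Y (prefix_len ys k + j)" by (rule seg_nth[OF yk j])
    have a5: "prefix_len ys k + j = n" using k(1) unfolding j_def by'_def by arith
    have a6: "S k (Suc j) \<in> \<delta> (S k j) (ys k ! j)" using S j unfolding good_def by blast
    from a1 a2 a3 a4 a5 a6 show "R (Suc n) \<in> \<delta> (R n) (Y n)" by simp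
  qed
  have R0: "R 0 = q0"
  proof -
    have "R 0 = S 0 0" using Rk[of 0 0] by0 by simp
    also have "\<dots> = r (bx 0)" using S unfolding good_def by blast
    finally show ?thesis using bx0 r0 by simp
  qed
  have "\<exists>\<^sub>\<infinity>n. R n \<in> F"
    unfolding INFM_nat
  proof
    fix N
    obtain k where k: "k > N" "flag k" using flag_inf by blast
    then obtain m where m: "m \<le> length (ys k)" "S k m \<in> F" using S unfolding good_def by blast
    have "R (by' k + m) = S k m" using Rk[of k "by' k + m"] m byS by simp
    moreover have "by' k + m > N" using strict_mono_imp_increasing[OF smy, of k] k by simp
    ultimately show "\<exists>n>N. R n \<in> F" using m by metis
  qed
  then show ?thesis using Y(1) R0 Rrun by (auto simp: lang_Inf)
qed

lemma classes_finite:
  fixes \<delta> :: "'q::finite \<Rightarrow> 'a \<Rightarrow> 'q set"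
  shows "finite (classes \<delta> F)"
proof -
  define key where "key w = (w = [], \<lambda>p q. reach \<delta> p w q, \<lambda>p q. reachF \<delta> F p w q)" for w :: "'a list"
  have eq: "key w = key w' \<Longrightarrow> cls \<delta> F w = cls \<delta> F w'" for w w'
  proof -
    assume k: "key w = key w'"
    have k1: "(w = []) = (w' = [])" using k unfolding key_def by simp
    have k2: "(\<lambda>p q. reach \<delta> p w q) = (\<lambda>p q. reach \<delta> p w' q)" using k unfolding key_def by simp
    have k3: "(\<lambda>p q. reachF \<delta> F p w q) = (\<lambda>p q. reachF \<delta> F p w' q)" using k unfolding key_def by simp
    have "\<And>p q. reach \<delta> p w q = reach \<delta> p w' q" using fun_cong[OF fun_cong[OF k2]] by simp
    moreover have "\<And>p q. reachF \<delta> F p w q = reachF \<delta> F p w' q" using fun_cong[OF fun_cong[OF k3]] by simp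
    ultimately have "(w = []) = (w' = []) \<and> aequiv \<delta> F w w'" using k1 unfolding aequiv_def by simp
    then show ?thesis unfolding cls_eq_iff .
  qed
  have "classes \<delta> F \<subseteq> (\<lambda>k. cls \<delta> F (SOME w. key w = k)) ` UNIV"
  proof
    fix C assume "C \<in> classes \<delta> F"
    then obtain w where C: "C = cls \<delta> F w" by (auto simp: classes_def)
    have "key (SOME w'. key w' = key w) = key w" by (rule someI) simp
    then have "C = cls \<delta> F (SOME w'. key w' = key w)" using eq C by metis
    then show "C \<in> (\<lambda>k. cls \<delta> F (SOME w. key w = k)) ` UNIV" by blast
  qed
  moreover have "finite ((\<lambda>k. cls \<delta> F (SOME w. key w = k)) ` (UNIV :: (bool \<times> ('q \<Rightarrow> 'q \<Rightarrow> bool) \<times> ('q \<Rightarrow> 'q \<Rightarrow> bool)) set))"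
    by (rule finite_imageI) (rule finite_UNIV)
  ultimately show ?thesis by (rule finite_subset)
qed

lemma ramsey_seg:
  fixes \<delta> :: "'q::finite \<Rightarrow> 'a \<Rightarrow> 'q set" and w :: "nat \<Rightarrow> 'a"
  shows "\<exists>h::nat \<Rightarrow> nat. strict_mono h \<and> (\<forall>i j::nat. i < j \<longrightarrow> cls \<delta> F (map w [h i..<h j]) = cls \<delta> F (map w [h 0..<h 1]))"
proof -
  let ?Cl = "classes \<delta> F"
  obtain e where e: "bij_betw e {0..<card ?Cl} ?Cl" using ex_bij_betw_nat_finite[OF classes_finite] by blast
  have img: "e ` {0..<card ?Cl} = ?Cl" using e by (simp add: bij_betw_def)
  have mem: "cls \<delta> F u \<in> e ` {0..<card ?Cl}" for u
    unfolding img by (simp add: classes_def)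
  define f where "f X = inv_into {0..<card ?Cl} e (cls \<delta> F (map w [Min X..<Max X]))" for X
  have fin: "f X < card ?Cl" for X
  proof -
    have "inv_into {0..<card ?Cl} e (cls \<delta> F (map w [Min X..<Max X])) \<in> {0..<card ?Cl}" by (rule inv_into_into[OF mem])
    then show ?thesis unfolding f_def by simp
  qed
  obtain Y t where Y: "infinite Y" "\<forall>x\<in>Y. \<forall>y\<in>Y. x \<noteq> y \<longrightarrow> f {x, y} = t"
  proof -
    have "\<forall>x\<in>(UNIV :: nat set). \<forall>y\<in>UNIV. x \<noteq> y \<longrightarrow> f {x, y} < card ?Cl" using fin by blast
    from Ramsey2[OF infinite_UNIV_nat this] obtain Y t where
      "Y \<subseteq> UNIV" "infinite Y" "t < card ?Cl" "\<forall>x\<in>Y. \<forall>y\<in>Y. x \<noteq> y \<longrightarrow> f {x, y} = t" by blast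
    then show ?thesis using that by blast
  qed
  define h where "h = enumerate Y"
  have sm: "strict_mono h" unfolding h_def strict_mono_def using enumerate_mono[OF _ Y(1)] by blast
  have hY: "h n \<in> Y" for n unfolding h_def using enumerate_in_set[OF Y(1)] .
  have fij: "f {h i, h j} = t" if "i < j" for i j
  proof -
    have "h i \<noteq> h j" using strict_monoD[OF sm that] by simp
    then show ?thesis using Y(2)[rule_format, OF hY[of i] hY[of j]] by simp
  qed
  have key: "cls \<delta> F (map w [h i..<h j]) = e (f {h i, h j})" if "i < j" for i j
  proof -
    have "h i < h j" using sm that by (simp add: strict_mono_less)
    then have mm: "Min {h i, h j} = h i" "Max {h i, h j} = h j" by auto
    show ?thesis unfolding f_def mm by (rule f_inv_into_f[OF mem, symmetric])
  qed
  have "\<forall>i j. i < j \<longrightarrow> cls \<delta> F (map w [h i..<h j]) = cls \<delta> F (map w [h 0..<h 1])"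
  proof (intro allI impI)
    fix i j :: nat assume "i < j"
    have "cls \<delta> F (map w [h i..<h j]) = e t" using key[OF \<open>i < j\<close>] fij[OF \<open>i < j\<close>] by simp
    moreover have "cls \<delta> F (map w [h 0..<h 1]) = e t" using key[of 0 1] fij[of 0 1] by simp
    ultimately show "cls \<delta> F (map w [h i..<h j]) = cls \<delta> F (map w [h 0..<h 1])" by simp
  qed
  then show ?thesis using sm by blast
qed

lemma cls_nil: "cls \<delta> F [] = {[]}" by (simp add: cls_def)

lemma classes_cases:
  assumes "D \<in> classes \<delta> F"
  shows "D = {[]} \<or> (\<forall>d\<in>D. d \<noteq> [])"
proof -
  obtain w where "D = cls \<delta> F w" using assms by (auto simp: classes_def)
  then show ?thesis by (cases "w = []") (simp_all add: cls_def)
qed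

lemma classes_mem: "D \<in> classes \<delta> F \<Longrightarrow> d \<in> D \<Longrightarrow> cls \<delta> F d = D"
  unfolding classes_def using mem_cls by blast

lemma classes_some: "D \<in> classes \<delta> F \<Longrightarrow> (SOME d. d \<in> D) \<in> D"
proof -
  assume "D \<in> classes \<delta> F"
  then obtain w where "D = cls \<delta> F w" by (auto simp: classes_def)
  then have "w \<in> D" using cls_self by simp
  then show ?thesis by (rule someI)
qed

lemma cmult_eq:
  assumes "C \<in> classes \<delta> F" "D \<in> classes \<delta> F" "c \<in> C" "d \<in> D"
  shows "cmult \<delta> F C D = cls \<delta> F (c @ d)"
proof -
  have "cls \<delta> F (SOME c. c \<in> C) = cls \<delta> F c" using classes_mem[OF assms(1)] classes_some[OF assms(1)] assms(3) by simp
  moreover have "cls \<delta> F (SOME d. d \<in> D) = cls \<delta> F d" using classes_mem[OF assms(2)] classes_some[OF assms(2)] assms(4) by simp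
  ultimately show ?thesis unfolding cmult_def by (rule cls_cong)
qed

lemma omega_pow_nil: "omega_pow {[]} = {Fin []}"
proof
  show "omega_pow {[]} \<subseteq> {Fin []}"
  proof
    fix x assume "x \<in> omega_pow {[]}"
    then obtain ws where ws: "\<forall>i. ws i \<in> {[]}" "x = infconcat ws" unfolding omega_pow_def by blast
    have "ws = (\<lambda>_. [])" using ws(1) by (intro ext) simp
    then show "x \<in> {Fin []}" using ws(2) infconcat_empty by simp
  qed
next
  have "Fin [] \<in> omega_pow {[]}" unfolding omega_pow_def
    by (rule CollectI, rule exI[of _ "\<lambda>_. []"]) (simp add: infconcat_empty)
  then show "{Fin []} \<subseteq> omega_pow {[]}" by simp
qed

lemma cdomega_nil:
  assumes "y \<in> cdomega C {[]}" shows "\<exists>c\<in>C. y = Fin c"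
proof -
  obtain c z where "c \<in> C" "z \<in> omega_pow {[]}" "y = wconc (Fin c) z" using assms unfolding cdomega_def by blast
  then show ?thesis unfolding omega_pow_nil by auto
qed

lemma cdomega_ne:
  assumes p: "(C, D) \<in> pairs \<delta> F" and ne: "\<forall>d\<in>D. d \<noteq> []" and y: "y \<in> cdomega C D"
  shows "\<exists>ys. (\<forall>k. ys k \<noteq> []) \<and> (\<forall>k. cls \<delta> F (ys k) = (if k = 0 then C else D)) \<and> y = infconcat ys"
proof -
  have C: "C \<in> classes \<delta> F" and D: "D \<in> classes \<delta> F" and CD: "cmult \<delta> F C D = C"
    using p by (auto simp: pairs_def)
  obtain c ds where c: "c \<in> C" and ds: "\<forall>i. ds i \<in> D" and yeq: "y = wconc (Fin c) (infconcat ds)"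
    using y unfolding cdomega_def omega_pow_def by blast
  have dsne: "\<forall>i. ds i \<noteq> []" using ds ne by blast
  define ys where "ys = (\<lambda>k. if k = 0 then c @ ds 0 else ds k)"
  have "y = infconcat ys" unfolding yeq ys_def by (rule wconc_infconcat[OF dsne])
  moreover have "\<forall>k. ys k \<noteq> []" using dsne by (simp add: ys_def)
  moreover have "cls \<delta> F (ys k) = (if k = 0 then C else D)" for k
  proof (cases "k = 0")
    case True
    have "cls \<delta> F (c @ ds 0) = C" using cmult_eq[OF C D c ds[rule_format, of 0]] CD by simp
    then show ?thesis using True by (simp add: ys_def)
  next
    case False
    then show ?thesis using classes_mem[OF D] ds by (simp add: ys_def)
  qed
  ultimately show ?thesis by blast
qed

lemma saturation:
  fixes \<delta> :: "'q \<Rightarrow> 'a \<Rightarrow> 'q set"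
  assumes p: "(C, D) \<in> pairs \<delta> F" and x: "x \<in> cdomega C D" "x \<in> lang \<delta> q0 F" and y: "y \<in> cdomega C D"
  shows "y \<in> lang \<delta> q0 F"
proof -
  have C: "C \<in> classes \<delta> F" and D: "D \<in> classes \<delta> F" using p by (auto simp: pairs_def)
  show ?thesis
  proof (cases "D = {[]}")
    case True
    obtain c' where c': "c' \<in> C" "x = Fin c'" using cdomega_nil x(1) True by blast
    obtain c where c: "c \<in> C" "y = Fin c" using cdomega_nil y True by blast
    have "cls \<delta> F c' = cls \<delta> F c" using classes_mem[OF C] c c' by simp
    then have "aequiv \<delta> F c' c" by (simp add: cls_eq_iff)
    then show ?thesis using aequiv_lang[of \<delta> F c' c q0] x(2) c c' by simp
  next
    case False
    then have ne: "\<forall>d\<in>D. d \<noteq> []" using classes_cases[OF D] by blast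
    obtain xs where xs: "\<forall>k. xs k \<noteq> []" "\<forall>k. cls \<delta> F (xs k) = (if k = 0 then C else D)" "x = infconcat xs"
      using cdomega_ne[OF p ne x(1)] by blast
    obtain ys where ys: "\<forall>k. ys k \<noteq> []" "\<forall>k. cls \<delta> F (ys k) = (if k = 0 then C else D)" "y = infconcat ys"
      using cdomega_ne[OF p ne y] by blast
    have "\<forall>k. aequiv \<delta> F (xs k) (ys k)"
    proof
      fix k have "cls \<delta> F (xs k) = cls \<delta> F (ys k)" using xs(2) ys(2) by simp
      then show "aequiv \<delta> F (xs k) (ys k)" by (simp add: cls_eq_iff)
    qed
    moreover have "infconcat xs \<in> lang \<delta> q0 F" using x(2) xs(3) by simp
    ultimately have "infconcat ys \<in> lang \<delta> q0 F" by (rule transfer_inf[OF xs(1) ys(1)])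
    then show ?thesis using ys(3) by simp
  qed
qed

lemma ff_sub_lang:
  assumes "V \<subseteq> lang \<delta> q0 F" "(C, D) \<in> ff \<delta> F V"
  shows "cdomega C D \<subseteq> lang \<delta> q0 F"
proof
  fix y assume y: "y \<in> cdomega C D"
  from assms(2) obtain x where "x \<in> cdomega C D" "x \<in> V" and p: "(C, D) \<in> pairs \<delta> F" by (auto simp: ff_def)
  then show "y \<in> lang \<delta> q0 F" using saturation[OF p _ _ y] assms(1) by blast
qed

lemma iter_sub_lang:
  assumes "L \<subseteq> lang \<delta> q0 F"
  shows "\<forall>(C, D) \<in> ((ff \<delta> F \<circ> gg) ^^ n) (ff \<delta> F L). cdomega C D \<subseteq> lang \<delta> q0 F"
proof (induction n)
  case 0 then show ?case using ff_sub_lang[OF assms] by auto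
next
  case (Suc n)
  have g: "gg (((ff \<delta> F \<circ> gg) ^^ n) (ff \<delta> F L)) \<subseteq> lang \<delta> q0 F"
    using Suc unfolding gg_def by blast
  show ?case
  proof (rule ballI)
    fix p assume p: "p \<in> ((ff \<delta> F \<circ> gg) ^^ Suc n) (ff \<delta> F L)"
    obtain C D where pe: "p = (C, D)" by (cases p)
    have "(C, D) \<in> ff \<delta> F (gg (((ff \<delta> F \<circ> gg) ^^ n) (ff \<delta> F L)))" using p pe by simp
    then have "cdomega C D \<subseteq> lang \<delta> q0 F" by (rule ff_sub_lang[OF g])
    then show "case p of (C, D) \<Rightarrow> cdomega C D \<subseteq> lang \<delta> q0 F" using pe by simp
  qed
qed

lemma decompose:
  fixes \<delta> :: "'q::finite \<Rightarrow> 'a \<Rightarrow> 'q set"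
  shows "\<exists>C D. (C, D) \<in> pairs \<delta> F \<and> x \<in> cdomega C D"
proof (cases x)
  case (Fin w)
  have C: "cls \<delta> F w \<in> classes \<delta> F" by (simp add: classes_def)
  have D: "{[]} \<in> classes \<delta> F" unfolding classes_def using cls_nil by (metis rangeI)
  have "cmult \<delta> F (cls \<delta> F w) {[]} = cls \<delta> F w" using cmult_eq[OF C D cls_self, of "[]"] by simp
  moreover have "cmult \<delta> F {[]} {[]} = {[]}" using cmult_eq[OF D D, of "[]" "[]"] cls_nil by simp
  ultimately have "(cls \<delta> F w, {[]}) \<in> pairs \<delta> F" using C D by (simp add: pairs_def)
  moreover have "x \<in> cdomega (cls \<delta> F w) {[]}"
    unfolding cdomega_def omega_pow_nil using Fin cls_self[of w \<delta> F] by force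
  ultimately show ?thesis by blast
next
  case (Inf w)
  obtain h :: "nat \<Rightarrow> nat" where sm: "strict_mono h"
    and hc: "\<forall>i j. i < j \<longrightarrow> cls \<delta> F (map w [h i..<h j]) = cls \<delta> F (map w [h 0..<h 1])"
    using ramsey_seg[of \<delta> F w] by blast
  define seg where "seg i j = map w [h i..<h j]" for i j
  define D where "D = cls \<delta> F (seg 0 1)"
  define C where "C = cls \<delta> F (map w [0..<h 1])"
  have hcD: "i < j \<Longrightarrow> cls \<delta> F (seg i j) = D" for i j using hc unfolding seg_def D_def by blast
  have hle: "i \<le> j \<Longrightarrow> h i \<le> h j" for i j using sm by (simp add: strict_mono_less_eq)
  have d01: "cls \<delta> F (seg 0 1) = D" and d12: "cls \<delta> F (seg 1 2) = D" and d02: "cls \<delta> F (seg 0 2) = D"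
    using hcD by simp_all
  have sa: "i \<le> j \<Longrightarrow> j \<le> k \<Longrightarrow> seg i j @ seg j k = seg i k" for i j k
    unfolding seg_def by (rule seg_append) (simp_all add: hle)
  have Ccl: "C \<in> classes \<delta> F" and Dcl: "D \<in> classes \<delta> F" by (simp_all add: C_def D_def classes_def)
  have DD: "cmult \<delta> F D D = D"
  proof -
    have "cmult \<delta> F D D = cls \<delta> F (seg 0 1 @ seg 1 2)"
    proof (rule cmult_eq[OF Dcl Dcl])
      have "seg 0 1 \<in> cls \<delta> F (seg 0 1)" by (rule cls_self)
      then show "seg 0 1 \<in> D" by (simp only: d01)
      have "seg 1 2 \<in> cls \<delta> F (seg 1 2)" by (rule cls_self)
      then show "seg 1 2 \<in> D" by (simp only: d12)
    qed
    also have "\<dots> = cls \<delta> F (seg 0 2)" using sa[of 0 1 2] by simp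
    also have "\<dots> = D" by (rule d02)
    finally show ?thesis .
  qed
  have h0: "h 0 \<le> h 1" "h 1 \<le> h 2" using hle by simp_all
  have CD: "cmult \<delta> F C D = C"
  proof -
    have "cmult \<delta> F C D = cls \<delta> F (map w [0..<h 1] @ seg 1 2)"
    proof (rule cmult_eq[OF Ccl Dcl])
      show "map w [0..<h 1] \<in> C" unfolding C_def by (rule cls_self)
      have "seg 1 2 \<in> cls \<delta> F (seg 1 2)" by (rule cls_self)
      then show "seg 1 2 \<in> D" by (simp only: d12)
    qed
    also have "map w [0..<h 1] @ seg 1 2 = map w [0..<h 0] @ seg 0 2"
      using seg_append[of 0 "h 1" "h 2" w] seg_append[of 0 "h 0" "h 2" w] h0 unfolding seg_def by simp
    also have "cls \<delta> F \<dots> = cls \<delta> F (map w [0..<h 0] @ seg 0 1)"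
      by (rule cls_cong) (rule refl, simp only: d01 d02)
    also have "map w [0..<h 0] @ seg 0 1 = map w [0..<h 1]"
      using seg_append[of 0 "h 0" "h 1" w] h0 unfolding seg_def by simp
    finally show ?thesis unfolding C_def .
  qed
  have "(C, D) \<in> pairs \<delta> F" using Ccl Dcl CD DD by (simp add: pairs_def)
  moreover have "x \<in> cdomega C D"
  proof -
    define b where "b k = h (Suc k)" for k
    have smb: "strict_mono b" using sm unfolding b_def strict_mono_def by simp
    define ds where "ds k = map w [b k..<b (Suc k)]" for k
    have "\<forall>i. ds i \<in> D"
    proof
      fix i
      have "cls \<delta> F (ds i) = D" using hcD[of "Suc i" "Suc (Suc i)"] unfolding ds_def b_def seg_def by simp
      then show "ds i \<in> D" using cls_self[of "ds i" \<delta> F] by simp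
    qed
    then have o1: "infconcat ds \<in> omega_pow D" unfolding omega_pow_def by blast
    have o2: "map w [0..<h 1] \<in> C" unfolding C_def by (rule cls_self)
    have o3: "wconc (Fin (map w [0..<h 1])) (infconcat ds) = Inf w"
      using infconcat_segs[OF smb, of w] wconc_prefix[of w "h 1"] unfolding ds_def b_def by simp
    show ?thesis unfolding cdomega_def mem_Collect_eq
      by (rule exI[of _ "map w [0..<h 1]"], rule exI[of _ "infconcat ds"], intro conjI) (simp only: Inf o3, rule o2, rule o1)
  qed
  ultimately show ?thesis by blast
qed

lemma ff_mem: "(C, D) \<in> ff \<delta> F V \<longleftrightarrow> (C, D) \<in> pairs \<delta> F \<and> cdomega C D \<inter> V \<noteq> {}"
  by (simp add: ff_def)

lemma part2:
  fixes \<delta> :: "'q::finite \<Rightarrow> 'a \<Rightarrow> 'q set"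
  shows "gamma_omega (alpha_omega \<delta> F L) \<subseteq> lang \<delta> q0 F \<longleftrightarrow> L \<subseteq> lang \<delta> q0 F"
proof
  assume h: "gamma_omega (alpha_omega \<delta> F L) \<subseteq> lang \<delta> q0 F"
  show "L \<subseteq> lang \<delta> q0 F"
  proof
    fix x assume xL: "x \<in> L"
    obtain C D where p: "(C, D) \<in> pairs \<delta> F" and xc: "x \<in> cdomega C D" using decompose[of \<delta> F x] by blast
    have ffL: "(C, D) \<in> ff \<delta> F L" using p xc xL unfolding ff_mem by blast
    have sub: "cdomega C D \<subseteq> gg (ff \<delta> F L)" unfolding gg_def by (rule UN_upper[OF ffL, of "\<lambda>(C, D). cdomega C D", simplified])
    have "(C, D) \<in> ff \<delta> F (gg (ff \<delta> F L))" using p xc sub unfolding ff_mem by blast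
    then have c1: "(C, D) \<in> ((ff \<delta> F \<circ> gg) ^^ 1) (ff \<delta> F L)"
      by (simp only: One_nat_def funpow.simps comp_apply id_apply)
    have "(C, D) \<in> alpha_omega \<delta> F L" unfolding alpha_omega_def cl_def
      by (rule UN_I[of "1::nat"], simp, rule c1)
    then have "cdomega C D \<subseteq> gamma_omega (alpha_omega \<delta> F L)" unfolding gamma_omega_def gg_def
      by (rule UN_upper[of "(C, D)" _ "\<lambda>(C, D). cdomega C D", simplified])
    then show "x \<in> lang \<delta> q0 F" using h xc by blast
  qed
next
  assume h: "L \<subseteq> lang \<delta> q0 F"
  show "gamma_omega (alpha_omega \<delta> F L) \<subseteq> lang \<delta> q0 F"
  proof
    fix x assume "x \<in> gamma_omega (alpha_omega \<delta> F L)"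
    then obtain p where p: "p \<in> alpha_omega \<delta> F L" and xp: "x \<in> (case p of (C, D) \<Rightarrow> cdomega C D)"
      unfolding gamma_omega_def gg_def by blast
    obtain C D where pe: "p = (C, D)" by (cases p)
    from p obtain n where "p \<in> ((ff \<delta> F \<circ> gg) ^^ n) (ff \<delta> F L)" unfolding alpha_omega_def cl_def by blast
    then have "cdomega C D \<subseteq> lang \<delta> q0 F" using iter_sub_lang[OF h, of n] pe by auto
    then show "x \<in> lang \<delta> q0 F" using xp pe by auto
  qed
qed

theorem lemma9:
  fixes \<delta> :: "'q::finite \<Rightarrow> 'a::finite \<Rightarrow> 'q set" and q0 :: 'q and F :: "'q set"
  shows "(\<forall>L :: 'a list set.
            gamma_star (alpha_star \<delta> F L) \<subseteq> {w. Fin w \<in> lang \<delta> q0 F}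
            \<longleftrightarrow> L \<subseteq> {w. Fin w \<in> lang \<delta> q0 F})
       \<and> (\<forall>L :: 'a xword set.
            gamma_omega (alpha_omega \<delta> F L) \<subseteq> lang \<delta> q0 F
            \<longleftrightarrow> L \<subseteq> lang \<delta> q0 F)"
proof (intro conjI allI)
  fix L :: "'a list set"
  show "gamma_star (alpha_star \<delta> F L) \<subseteq> {w. Fin w \<in> lang \<delta> q0 F} \<longleftrightarrow> L \<subseteq> {w. Fin w \<in> lang \<delta> q0 F}"
    by (rule part1)
next
  fix L :: "'a xword set"
  show "gamma_omega (alpha_omega \<delta> F L) \<subseteq> lang \<delta> q0 F \<longleftrightarrow> L \<subseteq> lang \<delta> q0 F"
    by (rule part2)
qed

end
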